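(* Let $A$ and $B$ be complex square matrices, not necessarily of the same size, with identical pseudospectra, i.e. $\|(zI-A)^{-1}\|=\|(zI-B)^{-1}\|$ for all $z\in\mathbb{C}$. Then the largest eigenvalue of $\operatorname{Re}A$ equals the largest eigenvalue of $\operatorname{Re}B$, and the smallest eigenvalue of $\operatorname{Re}A$ equals the smallest eigenvalue of $\operatorname{Re}B$.
   Context: $\operatorname{Re}T=(T+T^* )/2$. $\|\cdot\|$ is the spectral norm; by convention $\|(zI-T)^{-1}\|=\infty$ for $z$ an eigenvalue of $T$ (with the identity matrices $I$ of the appropriate sizes). *)

theory Defs
  imports "HOL-Analysis.Analysis"
begin

text \<open>Complex n x n matrices are represented as complex^'n^'n (n = CARD('n)),
  acting on complex^'n with the Euclidean (l2) norm.\<close>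

definition spec_norm :: "complex^'n^'m \<Rightarrow> real" where
  "spec_norm M = onorm (\<lambda>x::complex^'n. M *v x)"

definition conj_transpose :: "complex^'n^'m \<Rightarrow> complex^'m^'n" where
  "conj_transpose M = (\<chi> i j. cnj (M $ j $ i))"

definition herm_part :: "complex^'n^'n \<Rightarrow> complex^'n^'n" where
  "herm_part T = (1/2::real) *\<^sub>R (T + conj_transpose T)"

definition is_eigenvalue :: "complex^'n^'n \<Rightarrow> complex \<Rightarrow> bool" where
  "is_eigenvalue M c \<longleftrightarrow> (\<exists>v. v \<noteq> 0 \<and> M *v v = c *s v)"

definition resolvent_norm :: "complex^'n^'n \<Rightarrow> complex \<Rightarrow> ereal" where
  "resolvent_norm M z =
     (if is_eigenvalue M z then \<infinity>
      else ereal (spec_norm (matrix_inv (mat z - M))))"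

text \<open>Largest / smallest eigenvalue of a (Hermitian) matrix: max / min over its
  real eigenvalues (all eigenvalues of a Hermitian matrix are real).\<close>
definition lambda_max :: "complex^'n^'n \<Rightarrow> real" where
  "lambda_max M = Max {r::real. is_eigenvalue M (complex_of_real r)}"

definition lambda_min :: "complex^'n^'n \<Rightarrow> real" where
  "lambda_min M = Min {r::real. is_eigenvalue M (complex_of_real r)}"

end

theory Submission
  imports Defs
begin


lemma sym_eig_finite:
  fixes L :: "'a::euclidean_space \<Rightarrow> 'a"
  assumes sym: "\<And>u v. inner (L u) v = inner u (L v)"
  shows "finite {r. \<exists>v. v \<noteq> 0 \<and> L v = r *\<^sub>R v}"
proof -
  define S where "S = {r. \<exists>v. v \<noteq> 0 \<and> L v = r *\<^sub>R v}"
  define f where "f r = (SOME v. v \<noteq> 0 \<and> L v = r *\<^sub>R v)" for r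
  have f: "f r \<noteq> 0 \<and> L (f r) = r *\<^sub>R f r" if "r \<in> S" for r
  proof -
    have "\<exists>v. v \<noteq> 0 \<and> L v = r *\<^sub>R v" using that S_def by simp
    then show ?thesis unfolding f_def by (rule someI_ex)
  qed
  have inj: "inj_on f S"
  proof (rule inj_onI)
    fix r s assume rs: "r \<in> S" "s \<in> S" "f r = f s"
    then have "r *\<^sub>R f r = s *\<^sub>R f r" using f by metis
    then show "r = s" using f rs(1) by (simp add: scaleR_cancel_right)
  qed
  have orth: "pairwise orthogonal (f ` S)"
  proof (auto simp: pairwise_def orthogonal_def)
    fix r s assume rs: "r \<in> S" "s \<in> S" "f r \<noteq> f s"
    then have "r \<noteq> s" by auto
    have "inner (L (f r)) (f s) = inner (f r) (L (f s))" by (rule sym)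
    then have "r * inner (f r) (f s) = s * inner (f r) (f s)"
      using f rs by simp
    with \<open>r \<noteq> s\<close> show "inner (f r) (f s) = 0" by simp
  qed
  have "0 \<notin> f ` S" using f by auto
  then have "independent (f ` S)" using orth pairwise_orthogonal_independent by blast
  then have "finite (f ` S)" using independent_bound by blast
  then show ?thesis using inj finite_image_iff S_def by blast
qed

lemma sym_attains:
  fixes L :: "'a::euclidean_space \<Rightarrow> 'a"
  assumes lin: "linear L"
  shows "\<exists>v. norm v = 1 \<and> (\<forall>u. inner (L u) u \<le> inner (L v) v * (norm u)^2)"
proof -
  have cont: "continuous_on (sphere 0 1) (\<lambda>u. inner (L u) u)"
    using lin by (intro continuous_intros) (auto simp: linear_continuous_on linear_conv_bounded_linear)
  obtain b :: 'a where b: "b \<in> Basis" using nonempty_Basis by blast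
  then have ne: "sphere (0::'a) 1 \<noteq> {}" by (auto intro!: exI[of _ b])
  obtain v where v: "v \<in> sphere 0 1" and vmax: "\<And>u. u \<in> sphere 0 1 \<Longrightarrow> inner (L u) u \<le> inner (L v) v"
    using continuous_attains_sup[OF compact_sphere ne cont] by blast
  have "inner (L u) u \<le> inner (L v) v * (norm u)^2" for u
  proof (cases "u = 0")
    case True then show ?thesis using lin by (simp add: linear_0)
  next
    case False
    define w where "w = (1 / norm u) *\<^sub>R u"
    have "w \<in> sphere 0 1" using False by (simp add: w_def)
    then have "inner (L w) w \<le> inner (L v) v" by (rule vmax)
    moreover have "inner (L w) w = inner (L u) u / (norm u)^2"
      using lin False by (simp add: w_def linear_scale power2_eq_square)
    ultimately show ?thesis using False by (simp add: divide_le_eq)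
  qed
  then show ?thesis using v by auto
qed

lemma quad_nonpos:
  fixes a b :: real
  assumes "\<And>t. 2 * t * a + t^2 * b \<le> 0" and "a \<ge> 0"
  shows "a = 0"
proof (rule ccontr)
  assume "a \<noteq> 0" then have a: "a > 0" using assms by simp
  define t where "t = a / (\<bar>b\<bar> + 1)"
  have tp: "t > 0" using a by (simp add: t_def)
  have "2 * t * a + t^2 * b \<le> 0" by (rule assms)
  moreover have "2 * t * a + t^2 * b > 0"
  proof -
    have "t^2 * (- \<bar>b\<bar>) \<le> t^2 * b" by (rule mult_left_mono) auto
    then have "t^2 * b \<ge> - (t^2 * \<bar>b\<bar>)" by simp
    moreover have "t * \<bar>b\<bar> < a" using a by (simp add: t_def field_simps)
    then have "t^2 * \<bar>b\<bar> < t * a" using tp by (simp add: power2_eq_square)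
    moreover have "t * a > 0" using tp a by simp
    ultimately show ?thesis by linarith
  qed
  ultimately show False by simp
qed

lemma sym_max_eig:
  fixes L :: "'a::euclidean_space \<Rightarrow> 'a"
  assumes lin: "linear L" and sym: "\<And>u v. inner (L u) v = inner u (L v)"
    and v: "norm v = 1" and mx: "\<And>u. inner (L u) u \<le> m * (norm u)^2"
    and m: "inner (L v) v = m"
  shows "L v = m *\<^sub>R v"
proof -
  define w where "w = L v - m *\<^sub>R v"
  have "2 * t * inner w w + t^2 * (inner (L w) w - m * (norm w)^2) \<le> 0" for t
  proof -
    have ineq: "inner (L (v + t *\<^sub>R w)) (v + t *\<^sub>R w) \<le> m * (norm (v + t *\<^sub>R w))^2" by (rule mx)
    have e1: "inner (L (v + t *\<^sub>R w)) (v + t *\<^sub>R w)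
       = inner (L v) v + t * inner (L v) w + t * inner (L w) v + t^2 * inner (L w) w"
      using lin by (simp add: linear_add linear_scale inner_add_left inner_add_right power2_eq_square algebra_simps)
    have e2: "inner (L w) v = inner (L v) w" using sym by (metis inner_commute)
    have e3: "(norm (v + t *\<^sub>R w))^2 = 1 + 2 * t * inner v w + t^2 * (norm w)^2"
    proof -
      have vv: "inner v v = 1" by (metis power2_norm_eq_inner v one_power2)
      show ?thesis unfolding power2_norm_eq_inner
        using vv by (simp add: inner_add_left inner_add_right algebra_simps inner_commute power2_eq_square)
    qed
    have e4: "inner (L v) w = inner w w + m * inner v w"
      by (simp add: w_def inner_diff_left)
    have "2 * t * inner w w + t^2 * (inner (L w) w - m * (norm w)^2)
       = inner (L (v + t *\<^sub>R w)) (v + t *\<^sub>R w) - m * (norm (v + t *\<^sub>R w))^2"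
      unfolding e1 e2 e3 e4 m by (simp add: algebra_simps)
    then show ?thesis using ineq by linarith
  qed
  then have "inner w w = 0" by (intro quad_nonpos) auto
  then show ?thesis by (simp add: w_def)
qed



lemma cscaleR: "r *\<^sub>R (z::complex) = complex_of_real r * z"
  by (rule scaleR_conv_of_real)

lemma mv_scaleR: "(M::complex^'n^'m) *v (c *\<^sub>R x) = c *\<^sub>R (M *v x)"
  by (simp add: vec_eq_iff matrix_vector_mult_def scaleR_sum_right vector_scaleR_component cscaleR algebra_simps sum_distrib_left)

lemma mv_linear: "linear (\<lambda>x. (M::complex^'n^'m) *v x)"
  by (rule linearI) (simp_all add: matrix_vector_right_distrib mv_scaleR)

lemma mat_mv: "mat z *v (v::complex^'n) = z *s v"
  by (simp add: vec_eq_iff matrix_vector_mult_def mat_def if_distrib[of "\<lambda>x. x * _"] sum.delta' cong: if_cong)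

lemma ofreal_s: "complex_of_real r *s (v::complex^'n) = r *\<^sub>R v"
  by (simp add: vec_eq_iff vector_scaleR_component cscaleR)

lemma herm_mv: "herm_part A *v v = (1/2::real) *\<^sub>R (A *v v + conj_transpose A *v v)"
  by (simp add: herm_part_def vec_eq_iff matrix_vector_mult_def scaleR_sum_right
      sum.distrib algebra_simps vector_scaleR_component cscaleR sum_distrib_left)

lemma inner_complex_alt: "inner (x::complex) y = Re (x * cnj y)"
  by (simp add: inner_complex_def)

lemma adj: "inner (conj_transpose A *v u) (v::complex^'n) = inner (u::complex^'m) (A *v v)"
proof -
  have "inner (conj_transpose A *v u) v = Re (\<Sum>i\<in>UNIV. \<Sum>j\<in>UNIV. cnj (A$j$i) * u$j * cnj (v$i))"
    by (simp add: inner_vec_def inner_complex_alt conj_transpose_def matrix_vector_mult_def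
        sum_distrib_right Re_sum)
  also have "\<dots> = Re (\<Sum>j\<in>UNIV. \<Sum>i\<in>UNIV. u$j * cnj (A$j$i * v$i))"
    by (subst sum.swap) (simp add: algebra_simps)
  also have "\<dots> = inner u (A *v v)"
    by (simp add: inner_vec_def inner_complex_alt matrix_vector_mult_def
        sum_distrib_left Re_sum)
  finally show ?thesis .
qed

lemma adj2: "inner u (conj_transpose A *v v) = inner (A *v u) v"
  by (metis adj inner_commute)

lemma herm_sym: "inner (herm_part A *v u) v = inner u (herm_part A *v v)"
  by (simp add: herm_mv inner_add_left inner_add_right adj adj2)

lemma herm_quad: "inner (herm_part A *v v) v = inner (A *v v) v"
  by (simp add: herm_mv inner_add_left adj) (simp add: inner_commute[of v])

lemma eig_iff: "is_eigenvalue M (complex_of_real r) \<longleftrightarrow> (\<exists>v. v \<noteq> 0 \<and> M *v v = r *\<^sub>R v)"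
  by (simp add: is_eigenvalue_def ofreal_s)



lemma inj_mv_iff: "inj (\<lambda>x. (M::complex^'n^'n) *v x) \<longleftrightarrow> (\<forall>x. M *v x = 0 \<longrightarrow> x = 0)"
proof
  assume "inj (\<lambda>x. M *v x)" then show "\<forall>x. M *v x = 0 \<longrightarrow> x = 0"
    by (metis injD matrix_vector_mult_0_right)
next
  assume h: "\<forall>x. M *v x = 0 \<longrightarrow> x = 0"
  show "inj (\<lambda>x. M *v x)"
  proof (rule injI)
    fix x y assume "M *v x = M *v y"
    then have "M *v (x - y) = 0" by (simp add: matrix_vector_mult_diff_distrib)
    then show "x = y" using h by (metis eq_iff_diff_eq_0)
  qed
qed

lemma inj_invertible:
  fixes M :: "complex^'n^'n"
  assumes "inj (\<lambda>x. M *v x)"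
  shows "M ** matrix_inv M = mat 1 \<and> matrix_inv M ** M = mat 1"
proof -
  have "det (matrix (\<lambda>x. M *v x)) \<noteq> 0"
    using det_nz_iff_inj_gen[of "\<lambda>x. M *v x"] assms by simp
  then have "invertible M" by (simp add: invertible_det_nz)
  then show ?thesis unfolding invertible_def matrix_inv_def by (rule someI_ex)
qed

lemma res_le:
  fixes A :: "complex^'n^'n"
  assumes d: "\<delta> > 0"
  shows "resolvent_norm A z \<le> ereal (1/\<delta>) \<longleftrightarrow> (\<forall>v. \<delta> * norm v \<le> norm (z *s v - A *v v))"
proof -
  define M where "M = mat z - A"
  define N where "N = matrix_inv M"
  have Mv: "M *v v = z *s v - A *v v" for v
    by (simp add: M_def matrix_vector_mult_diff_rdistrib mat_mv)
  have eig: "is_eigenvalue A z \<longleftrightarrow> \<not> inj (\<lambda>x. M *v x)"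
  proof -
    have "is_eigenvalue A z \<longleftrightarrow> (\<exists>v. v \<noteq> 0 \<and> M *v v = 0)"
      unfolding is_eigenvalue_def Mv by (metis eq_iff_diff_eq_0)
    then show ?thesis unfolding inj_mv_iff by blast
  qed
  have inv: "N *v (M *v v) = v \<and> M *v (N *v v) = v" if "inj (\<lambda>x. M *v x)" for v
    using inj_invertible[OF that] unfolding N_def
    by (simp add: matrix_vector_mul_assoc)
  have bl: "bounded_linear (\<lambda>x. N *v x)"
    using mv_linear linear_conv_bounded_linear by blast
  show ?thesis
  proof
    assume h: "resolvent_norm A z \<le> ereal (1/\<delta>)"
    then have ninj: "inj (\<lambda>x. M *v x)" using eig unfolding resolvent_norm_def by auto
    then have "ereal (spec_norm N) \<le> ereal (1/\<delta>)" using h eig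
      unfolding resolvent_norm_def N_def M_def by simp
    then have on: "onorm (\<lambda>x. N *v x) \<le> 1/\<delta>" by (simp add: spec_norm_def)
    show "\<forall>v. \<delta> * norm v \<le> norm (z *s v - A *v v)"
    proof
      fix v
      have "norm v = norm (N *v (M *v v))" using inv[OF ninj] by simp
      also have "\<dots> \<le> onorm (\<lambda>x. N *v x) * norm (M *v v)" by (rule onorm[OF bl])
      also have "\<dots> \<le> 1/\<delta> * norm (M *v v)" by (rule mult_right_mono[OF on]) simp
      finally show "\<delta> * norm v \<le> norm (z *s v - A *v v)" using d unfolding Mv
        by (simp add: field_simps)
    qed
  next
    assume h: "\<forall>v. \<delta> * norm v \<le> norm (z *s v - A *v v)"
    then have ninj: "inj (\<lambda>x. M *v x)" unfolding inj_mv_iff Mv[symmetric]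
      using d by (metis mult_le_0_iff norm_eq_zero norm_ge_zero norm_zero order_antisym_conv zero_less_norm_iff linorder_not_le)
    have "norm (N *v w) \<le> 1/\<delta> * norm w" for w
    proof -
      have "\<delta> * norm (N *v w) \<le> norm (M *v (N *v w))" using h unfolding Mv by blast
      then show ?thesis using inv[OF ninj] d by (simp add: field_simps)
    qed
    then have "onorm (\<lambda>x. N *v x) \<le> 1/\<delta>" by (rule onorm_le)
    then show "resolvent_norm A z \<le> ereal (1/\<delta>)"
      using ninj eig unfolding resolvent_norm_def spec_norm_def N_def M_def by simp
  qed
qed



lemma eig_quad: "L u = r *\<^sub>R u \<Longrightarrow> inner (L u) u = r * (norm u)^2"
  by (simp add: power2_norm_eq_inner)

lemma lmax:
  fixes A :: "complex^'n^'n"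
  shows "(\<forall>u. inner (A *v u) u \<le> lambda_max (herm_part A) * (norm u)^2) \<and>
         (\<exists>v. norm v = 1 \<and> inner (A *v v) v = lambda_max (herm_part A))"
proof -
  define L where "L = (\<lambda>x. herm_part A *v x)"
  have lin: "linear L" unfolding L_def by (rule mv_linear)
  have sym: "\<And>u v. inner (L u) v = inner u (L v)" unfolding L_def by (rule herm_sym)
  obtain v where v: "norm v = 1" and mx: "\<And>u. inner (L u) u \<le> inner (L v) v * (norm u)^2"
    using sym_attains[OF lin] by blast
  define m where "m = inner (L v) v"
  have mx': "\<And>u. inner (L u) u \<le> m * (norm u)^2" using mx unfolding m_def .
  have Lv: "L v = m *\<^sub>R v" using sym_max_eig[OF lin sym v mx' m_def[symmetric]] .
  define S where "S = {r. is_eigenvalue (herm_part A) (complex_of_real r)}"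
  have S: "S = {r. \<exists>v. v \<noteq> 0 \<and> L v = r *\<^sub>R v}" unfolding S_def L_def eig_iff ..
  have fin: "finite S" unfolding S by (rule sym_eig_finite[OF sym])
  have mS: "m \<in> S" unfolding S using v Lv by (auto intro!: exI[of _ v])
  have le: "r \<le> m" if "r \<in> S" for r
  proof -
    have "\<exists>u. u \<noteq> 0 \<and> L u = r *\<^sub>R u" using that by (simp add: S)
    then obtain u where u: "u \<noteq> 0" "L u = r *\<^sub>R u" by blast
    have "r * (norm u)^2 \<le> m * (norm u)^2" using mx[of u] eig_quad[of L u r, OF u(2)] m_def by simp
    then show ?thesis using u by simp
  qed
  have "lambda_max (herm_part A) = m"
    unfolding lambda_max_def S_def[symmetric] using fin mS le by (intro Max_eqI) auto
  moreover have "inner (A *v u) u = inner (L u) u" for u unfolding L_def by (simp add: herm_quad)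
  ultimately show ?thesis using mx v m_def by auto
qed

lemma lmin:
  fixes A :: "complex^'n^'n"
  shows "(\<forall>u. lambda_min (herm_part A) * (norm u)^2 \<le> inner (A *v u) u) \<and>
         (\<exists>v. norm v = 1 \<and> inner (A *v v) v = lambda_min (herm_part A))"
proof -
  define L where "L = (\<lambda>x. - (herm_part A *v x))"
  have lin: "linear L" unfolding L_def by (intro linear_compose_neg mv_linear)
  have sym: "\<And>u v. inner (L u) v = inner u (L v)" unfolding L_def by (simp add: herm_sym)
  obtain v where v: "norm v = 1" and mx: "\<And>u. inner (L u) u \<le> inner (L v) v * (norm u)^2"
    using sym_attains[OF lin] by blast
  define m where "m = inner (L v) v"
  have mx': "\<And>u. inner (L u) u \<le> m * (norm u)^2" using mx unfolding m_def .
  have Lv: "L v = m *\<^sub>R v" using sym_max_eig[OF lin sym v mx' m_def[symmetric]] .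
  then have Hv: "herm_part A *v v = (- m) *\<^sub>R v" unfolding L_def by (metis minus_minus scaleR_minus_left)
  define S where "S = {r. is_eigenvalue (herm_part A) (complex_of_real r)}"
  have S: "S = {r. \<exists>v. v \<noteq> 0 \<and> herm_part A *v v = r *\<^sub>R v}" unfolding S_def eig_iff ..
  have fin: "finite S" unfolding S by (rule sym_eig_finite[OF herm_sym])
  have mS: "- m \<in> S" unfolding S using v Hv by (auto intro!: exI[of _ v])
  have le: "- m \<le> r" if "r \<in> S" for r
  proof -
    have "\<exists>u. u \<noteq> 0 \<and> herm_part A *v u = r *\<^sub>R u" using that by (simp add: S)
    then obtain u where u: "u \<noteq> 0" "herm_part A *v u = r *\<^sub>R u" by blast
    have "L u = (-r) *\<^sub>R u" using u(2) unfolding L_def by simp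
    then have "inner (L u) u = (-r) * (norm u)^2" by (rule eig_quad)
    then have "(- r) * (norm u)^2 \<le> m * (norm u)^2" using mx'[of u] by simp
    moreover have "(norm u)^2 > 0" using u by simp
    ultimately have "- r \<le> m" by (rule mult_right_le_imp_le)
    then show ?thesis by simp
  qed
  have "lambda_min (herm_part A) = - m"
    unfolding lambda_min_def S_def[symmetric] using fin mS le by (intro Min_eqI) auto
  moreover have "inner (A *v u) u = - inner (L u) u" for u unfolding L_def by (simp add: herm_quad)
  ultimately show ?thesis using mx v m_def by (auto simp: algebra_simps)
qed



lemma normsq_diff:
  fixes v :: "complex^'n"
  assumes "norm v = 1"
  shows "(norm (x *\<^sub>R v - A *v v))^2 = x^2 - 2 * x * inner (A *v v) v + (norm (A *v v))^2"
proof -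
  have vv: "inner v v = 1" by (metis power2_norm_eq_inner assms one_power2)
  show ?thesis unfolding power2_norm_eq_inner
  proof -
    have c: "inner v (A *v v) = inner (A *v v) v" by (rule inner_commute)
    have "inner (x *\<^sub>R v - A *v v) (x *\<^sub>R v - A *v v)
        = x * x * inner v v - 2 * x * inner (A *v v) v + inner (A *v v) (A *v v)"
      by (simp add: inner_diff_left inner_diff_right c algebra_simps)
    then show "inner (x *\<^sub>R v - A *v v) (x *\<^sub>R v - A *v v) =
      x^2 - 2 * x * inner (A *v v) v + inner (A *v v) (A *v v)" using vv by (simp add: power2_eq_square)
  qed
qed

lemma P_iff:
  fixes A :: "complex^'n^'n"
  shows "(\<forall>x::real. x > c \<longrightarrow> resolvent_norm A (complex_of_real x) \<le> ereal (1/(x-c)))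
         \<longleftrightarrow> lambda_max (herm_part A) \<le> c"
proof -
  define m where "m = lambda_max (herm_part A)"
  have mx: "\<And>u. inner (A *v u) u \<le> m * (norm u)^2" and ex: "\<exists>v. norm v = 1 \<and> inner (A *v v) v = m"
    using lmax[of A] unfolding m_def by auto
  have eq: "resolvent_norm A (complex_of_real x) \<le> ereal (1/(x-c)) \<longleftrightarrow>
       (\<forall>v. (x - c) * norm v \<le> norm (x *\<^sub>R v - A *v v))" if "x > c" for x
    using res_le[of "x - c" A "complex_of_real x"] that by (simp add: ofreal_s)
  show ?thesis
  proof
    assume h: "\<forall>x. x > c \<longrightarrow> resolvent_norm A (complex_of_real x) \<le> ereal (1/(x-c))"
    show "lambda_max (herm_part A) \<le> c"
    proof (rule ccontr)
      assume "\<not> lambda_max (herm_part A) \<le> c"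
      then have mc: "m > c" unfolding m_def by simp
      obtain v where v: "norm v = 1" "inner (A *v v) v = m" using ex by blast
      define K where "K = (norm (A *v v))^2"
      define x where "x = max (c + 1) ((K + 1) / (2 * (m - c)))"
      have xc: "x > c" unfolding x_def by simp
      have "(K + 1) / (2 * (m - c)) \<le> x" unfolding x_def by simp
      then have "K + 1 \<le> x * (2 * (m - c))" using mc by (simp add: divide_le_eq)
      moreover have "x * (2 * (m - c)) = 2 * x * (m - c)" by simp
      moreover have "c^2 \<ge> 0" by simp
      ultimately have big: "2 * x * (m - c) > K - c^2" by linarith
      have "(norm (x *\<^sub>R v - A *v v))^2 = x^2 - 2 * x * m + K"
        using normsq_diff[OF v(1), of x A] v(2) K_def by simp
      also have "\<dots> < (x - c)^2" using big by (simp add: power2_eq_square algebra_simps)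
      finally have "norm (x *\<^sub>R v - A *v v) < x - c"
        using xc by (meson power2_less_imp_less less_imp_le diff_gt_0_iff_gt)
      moreover have "(x - c) * norm v \<le> norm (x *\<^sub>R v - A *v v)" using h xc eq by blast
      ultimately show False using v by simp
    qed
  next
    assume mc: "lambda_max (herm_part A) \<le> c"
    show "\<forall>x. x > c \<longrightarrow> resolvent_norm A (complex_of_real x) \<le> ereal (1/(x-c))"
    proof (intro allI impI)
      fix x :: real assume xc: "x > c"
      have "(x - c) * norm v \<le> norm (x *\<^sub>R v - A *v v)" for v
      proof (cases "v = 0")
        case True then show ?thesis by simp
      next
        case False
        have "(x - c) * (norm v)^2 \<le> x * (norm v)^2 - inner (A *v v) v"
        proof -
          have "m * (norm v)^2 \<le> c * (norm v)^2" using mc m_def by (intro mult_right_mono) auto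
          moreover have "(x - c) * (norm v)^2 = x * (norm v)^2 - c * (norm v)^2" by (simp add: algebra_simps)
          ultimately show ?thesis using mx[of v] by linarith
        qed
        also have "\<dots> = inner (x *\<^sub>R v - A *v v) v" by (simp add: inner_diff_left power2_norm_eq_inner)
        also have "\<dots> \<le> norm (x *\<^sub>R v - A *v v) * norm v" by (rule norm_cauchy_schwarz)
        finally have "((x - c) * norm v) * norm v \<le> norm (x *\<^sub>R v - A *v v) * norm v"
          by (simp add: power2_eq_square algebra_simps)
        then show ?thesis using False by simp
      qed
      then show "resolvent_norm A (complex_of_real x) \<le> ereal (1/(x-c))" using eq xc by blast
    qed
  qed
qed


lemma Q_iff:
  fixes A :: "complex^'n^'n"
  shows "(\<forall>x::real. x < c \<longrightarrow> resolvent_norm A (complex_of_real x) \<le> ereal (1/(c-x)))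
         \<longleftrightarrow> c \<le> lambda_min (herm_part A)"
proof -
  define m where "m = lambda_min (herm_part A)"
  have mx: "\<And>u. m * (norm u)^2 \<le> inner (A *v u) u" and ex: "\<exists>v. norm v = 1 \<and> inner (A *v v) v = m"
    using lmin[of A] unfolding m_def by auto
  have eq: "resolvent_norm A (complex_of_real x) \<le> ereal (1/(c-x)) \<longleftrightarrow>
       (\<forall>v. (c - x) * norm v \<le> norm (x *\<^sub>R v - A *v v))" if "x < c" for x
    using res_le[of "c - x" A "complex_of_real x"] that by (simp add: ofreal_s)
  show ?thesis
  proof
    assume h: "\<forall>x. x < c \<longrightarrow> resolvent_norm A (complex_of_real x) \<le> ereal (1/(c-x))"
    show "c \<le> lambda_min (herm_part A)"
    proof (rule ccontr)
      assume "\<not> c \<le> lambda_min (herm_part A)"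
      then have mc: "m < c" unfolding m_def by simp
      obtain v where v: "norm v = 1" "inner (A *v v) v = m" using ex by blast
      define K where "K = (norm (A *v v))^2"
      define x where "x = min (c - 1) (- ((K + 1) / (2 * (c - m))))"
      have xc: "x < c" unfolding x_def by simp
      have "(K + 1) / (2 * (c - m)) \<le> - x" unfolding x_def by simp
      then have "K + 1 \<le> (- x) * (2 * (c - m))" using mc by (simp add: divide_le_eq)
      moreover have "(- x) * (2 * (c - m)) = 2 * x * (m - c)" by (simp add: algebra_simps)
      moreover have "c^2 \<ge> 0" by simp
      ultimately have big: "2 * x * (m - c) > K - c^2" by linarith
      have "(norm (x *\<^sub>R v - A *v v))^2 = x^2 - 2 * x * m + K"
        using normsq_diff[OF v(1), of x A] v(2) K_def by simp
      also have "\<dots> < (c - x)^2" using big by (simp add: power2_eq_square algebra_simps)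
      finally have "norm (x *\<^sub>R v - A *v v) < c - x"
        using xc by (meson power2_less_imp_less less_imp_le diff_gt_0_iff_gt)
      moreover have "(c - x) * norm v \<le> norm (x *\<^sub>R v - A *v v)" using h xc eq by blast
      ultimately show False using v by simp
    qed
  next
    assume mc: "c \<le> lambda_min (herm_part A)"
    show "\<forall>x. x < c \<longrightarrow> resolvent_norm A (complex_of_real x) \<le> ereal (1/(c-x))"
    proof (intro allI impI)
      fix x :: real assume xc: "x < c"
      have "(c - x) * norm v \<le> norm (x *\<^sub>R v - A *v v)" for v
      proof (cases "v = 0")
        case True then show ?thesis by simp
      next
        case False
        have "(c - x) * (norm v)^2 \<le> inner (A *v v) v - x * (norm v)^2"
        proof -
          have "c * (norm v)^2 \<le> m * (norm v)^2" using mc m_def by (intro mult_right_mono) auto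
          moreover have "(c - x) * (norm v)^2 = c * (norm v)^2 - x * (norm v)^2" by (simp add: algebra_simps)
          ultimately show ?thesis using mx[of v] by linarith
        qed
        also have "\<dots> = inner (A *v v - x *\<^sub>R v) v" by (simp add: inner_diff_left power2_norm_eq_inner)
        also have "\<dots> \<le> norm (A *v v - x *\<^sub>R v) * norm v" by (rule norm_cauchy_schwarz)
        also have "\<dots> = norm (x *\<^sub>R v - A *v v) * norm v" by (simp add: norm_minus_commute)
        finally have "((c - x) * norm v) * norm v \<le> norm (x *\<^sub>R v - A *v v) * norm v"
          by (simp add: power2_eq_square algebra_simps)
        then show ?thesis using False by simp
      qed
      then show "resolvent_norm A (complex_of_real x) \<le> ereal (1/(c-x))" using eq xc by blast
    qed
  qed
qed

theorem lemma7:
  fixes A :: "complex^'n^'n" and B :: "complex^'m^'m"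
  assumes "\<forall>z. resolvent_norm A z = resolvent_norm B z"
  shows "lambda_max (herm_part A) = lambda_max (herm_part B) \<and>
         lambda_min (herm_part A) = lambda_min (herm_part B)"
proof
  have "lambda_max (herm_part A) \<le> c \<longleftrightarrow> lambda_max (herm_part B) \<le> c" for c
    using P_iff[of c A] P_iff[of c B] assms by simp
  then show "lambda_max (herm_part A) = lambda_max (herm_part B)" by (meson order_antisym order_refl)
next
  have "c \<le> lambda_min (herm_part A) \<longleftrightarrow> c \<le> lambda_min (herm_part B)" for c
    using Q_iff[of c A] Q_iff[of c B] assms by simp
  then show "lambda_min (herm_part A) = lambda_min (herm_part B)" by (meson order_antisym order_refl)
qed

end
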